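(* Let $q=(x,y)$ be a solution of the planar Stark problem $\ddot x=-x/r^3+1$, $\ddot y=-y/r^3$ ($r=\sqrt{x^2+y^2}$) with energy $H$ and constant $c$, and let $(\xi(\tau),\eta(\tau))$ be its regularized parabolic coordinates. If $\xi$ and $\eta$ are both periodic functions of $\tau$, with minimal positive periods $T_\xi$ and $T_\eta$ respectively, then $T_\xi>T_\eta$.
   Context: Energy: $H=\frac12(\dot x^2+\dot y^2)-\frac1r-x$. The constant $c$ is the conserved quantity $c=-\dot y(x\dot y-y\dot x)+\frac{x}{r}-\frac12y^2$. Regularized parabolic coordinates: $\xi^2=r+x$, $\eta^2=r-x$, with new time $\tau$ defined by $dt=(\xi^2+\eta^2)\,d\tau$; writing $'=d/d\tau$, they satisfy $\xi'^2=\xi^4+2H\xi^2+2(c+1)$ and $\eta'^2=-\eta^4+2H\eta^2-2(c-1)$, i.e. $\xi''=2\xi^3+2H\xi$, $\eta''=-2\eta^3+2H\eta$. *)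

theory Defs
  imports "HOL-Analysis.Analysis"
begin

definition stark_energy :: "real \<Rightarrow> real \<Rightarrow> real \<Rightarrow> real \<Rightarrow> real" where
  "stark_energy x y vx vy = (vx^2 + vy^2) / 2 - 1 / sqrt (x^2 + y^2) - x"

definition stark_const :: "real \<Rightarrow> real \<Rightarrow> real \<Rightarrow> real \<Rightarrow> real" where
  "stark_const x y vx vy = - vy * (x * vy - y * vx) + x / sqrt (x^2 + y^2) - y^2 / 2"

definition periodic_with :: "(real \<Rightarrow> real) \<Rightarrow> real \<Rightarrow> bool" where
  "periodic_with f T \<longleftrightarrow> T > 0 \<and> (\<forall>s. f (s + T) = f s)"

definition minimal_period :: "(real \<Rightarrow> real) \<Rightarrow> real \<Rightarrow> bool" where
  "minimal_period f T \<longleftrightarrow> periodic_with f T \<and> (\<forall>T'. 0 < T' \<and> T' < T \<longrightarrow> \<not> periodic_with f T')"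

end

theory Submission
  imports Defs
begin

lemma antideriv:
  fixes f :: "real \<Rightarrow> real"
  assumes "\<And>x. isCont f x"
  shows "\<exists>F. \<forall>x. (F has_real_derivative f x) (at x)"
proof -
  have "\<exists>F. \<forall>x :: real. (-\<infinity>::ereal) < x \<longrightarrow> x < \<infinity> \<longrightarrow> (F has_vector_derivative f x) (at x)"
    by (rule einterval_antiderivative) (auto simp: assms)
  then show ?thesis by (auto simp: has_real_derivative_iff_has_vector_derivative)
qed

lemma periodic_int:
  fixes f :: "real \<Rightarrow> real" and T :: real
  assumes "\<forall>s. f (s + T) = (f s :: real)"
  shows "f (s + of_int k * T) = f s"
proof -
  have n: "f (s + real n * T) = f s" for n s
  proof (induction n arbitrary: s)
    case (Suc n)
    have "f (s + real (Suc n) * T) = f ((s + real n * T) + T)" by (simp add: algebra_simps)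
    also have "\<dots> = f (s + real n * T)" using assms by blast
    finally show ?case using Suc by simp
  qed simp
  show ?thesis
  proof (cases "k \<ge> 0")
    case True then show ?thesis using n[of s "nat k"] by simp
  next
    case False
    have "f (s + of_int k * T + real (nat (-k)) * T) = f (s + of_int k * T)" by (rule n)
    then show ?thesis using False by simp
  qed
qed

lemma periodic_max:
  fixes f :: "real \<Rightarrow> real" and T :: real
  assumes c: "\<And>x. isCont f x" and T: "T > 0" and p: "\<forall>s. f (s + T) = f s"
  shows "\<exists>t. \<forall>s. f s \<le> f t"
proof -
  have "continuous_on {0..T} f" using c by (simp add: continuous_at_imp_continuous_on)
  then obtain t where t: "\<forall>y\<in>{0..T}. f y \<le> f t"
    using continuous_attains_sup[of "{0..T}" f] T by auto
  have "f s \<le> f t" for s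
  proof -
    define k where "k = floor (s / T)"
    define s' where "s' = s - of_int k * T"
    have "of_int k \<le> s / T" "s / T < of_int k + 1" unfolding k_def by linarith+
    then have "of_int k * T \<le> s" "s < (of_int k + 1) * T" using T by (auto simp: field_simps)
    then have "s' \<in> {0..T}" unfolding s'_def by (auto simp: algebra_simps)
    moreover have "f s = f s'" using periodic_int[OF p, of s' k] unfolding s'_def by simp
    ultimately show ?thesis using t by auto
  qed
  then show ?thesis by blast
qed

lemma periodic_min:
  fixes f :: "real \<Rightarrow> real" and T :: real
  assumes c: "\<And>x. isCont f x" and T: "T > 0" and p: "\<forall>s. f (s + T) = f s"
  shows "\<exists>t. \<forall>s. f t \<le> f s"
proof -
  have "\<exists>t. \<forall>s. (\<lambda>x. - f x) s \<le> (\<lambda>x. - f x) t"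
    by (rule periodic_max) (use c T p in auto)
  then show ?thesis by auto
qed

lemma max_second:
  fixes u du :: "real \<Rightarrow> real"
  assumes d: "\<And>t. (u has_real_derivative du t) (at t)"
    and dd: "(du has_real_derivative a) (at t1)"
    and mx: "\<forall>s. u s \<le> u t1"
  shows "du t1 = 0 \<and> a \<le> 0"
proof -
  have z: "du t1 = 0"
    by (rule DERIV_local_max[OF d, of 1]) (use mx in auto)
  moreover have "a \<le> 0"
  proof (rule ccontr)
    assume "\<not> a \<le> 0"
    then obtain e where e: "e > 0" "\<forall>h>0. h < e \<longrightarrow> du t1 < du (t1 + h)"
      using DERIV_pos_inc_right[OF dd] by auto
    obtain z where zz: "t1 < z" "z < t1 + e/2" "u (t1 + e/2) - u t1 = (t1 + e/2 - t1) * du z"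
      using MVT2[of t1 "t1 + e/2" u du] d e by auto
    have "du z > 0" using e(2)[rule_format, of "z - t1"] zz z by auto
    then have "e * du z > 0" using e(1) by simp
    then have "u (t1 + e/2) > u t1" using zz(3) by (simp add: algebra_simps)
    then show False using mx by (meson not_le)
  qed
  ultimately show ?thesis by blast
qed

lemma min_second:
  fixes u du :: "real \<Rightarrow> real"
  assumes d: "\<And>t. (u has_real_derivative du t) (at t)"
    and dd: "(du has_real_derivative a) (at t1)"
    and mn: "\<forall>s. u t1 \<le> u s"
  shows "du t1 = 0 \<and> a \<ge> 0"
proof -
  have "(\<lambda>t. - du t) t1 = 0 \<and> - a \<le> 0"
    by (rule max_second[of "\<lambda>t. - u t"]) (use d dd mn in \<open>auto intro!: derivative_eq_intros\<close>)
  then show ?thesis by simp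
qed

lemma ode_unique:
  fixes ua ub va vb g :: "real \<Rightarrow> real" and L sa t :: real
  assumes d1: "\<And>t. (ua has_real_derivative va t) (at t)"
    and dd1: "\<And>t. (va has_real_derivative g (ua t)) (at t)"
    and d2: "\<And>t. (ub has_real_derivative vb t) (at t)"
    and dd2: "\<And>t. (vb has_real_derivative g (ub t)) (at t)"
    and L: "L \<ge> 0"
    and lip: "\<And>t. \<bar>g (ua t) - g (ub t)\<bar> \<le> L * \<bar>ua t - ub t\<bar>"
    and i1: "ua sa = ub sa" and i2: "va sa = vb sa"
  shows "ua t = ub t"
proof -
  define E where "E s = (ua s - ub s)\<^sup>2 + (va s - vb s)\<^sup>2" for s
  define E' where "E' s = 2 * (ua s - ub s) * (va s - vb s) + 2 * (va s - vb s) * (g (ua s) - g (ub s))" for s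
  define C where "C = 1 + L"
  have dE: "(E has_real_derivative E' s) (at s)" for s
    unfolding E_def E'_def
    by (auto intro!: derivative_eq_intros d1 d2 dd1 dd2 simp: algebra_simps)
  have bnd: "\<bar>E' s\<bar> \<le> C * E s" for s
  proof -
    define a where "a = ua s - ub s"
    define b where "b = va s - vb s"
    define q where "q = g (ua s) - g (ub s)"
    have q: "\<bar>q\<bar> \<le> L * \<bar>a\<bar>" using lip[of s] by (simp add: a_def q_def)
    have "\<bar>E' s\<bar> = \<bar>2 * a * b + 2 * b * q\<bar>"
      unfolding E'_def a_def b_def q_def by simp
    also have "\<dots> \<le> \<bar>2 * a * b\<bar> + \<bar>2 * b * q\<bar>" by (rule abs_triangle_ineq)
    also have "\<dots> = 2 * \<bar>a\<bar> * \<bar>b\<bar> + 2 * \<bar>b\<bar> * \<bar>q\<bar>" by (simp add: abs_mult)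
    also have "\<dots> \<le> 2 * \<bar>a\<bar> * \<bar>b\<bar> + 2 * \<bar>b\<bar> * (L * \<bar>a\<bar>)"
      using q by (intro add_left_mono mult_left_mono) auto
    also have "\<dots> = (1 + L) * (2 * \<bar>a\<bar> * \<bar>b\<bar>)" by (simp add: algebra_simps)
    also have "\<dots> \<le> (1 + L) * (a\<^sup>2 + b\<^sup>2)"
    proof (rule mult_left_mono)
      have "0 \<le> (\<bar>a\<bar> - \<bar>b\<bar>)\<^sup>2" by simp
      then show "2 * \<bar>a\<bar> * \<bar>b\<bar> \<le> a\<^sup>2 + b\<^sup>2" by (simp add: power2_eq_square algebra_simps)
    qed (use L in auto)
    finally show ?thesis by (simp add: E_def C_def a_def b_def)
  qed
  have E0: "E sa = 0" using i1 i2 by (simp add: E_def)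
  have Enn: "E s \<ge> 0" for s by (simp add: E_def)
  have "E t = 0"
  proof (cases "sa \<le> t")
    case True
    have "(\<lambda>s. E s * exp (- C * s)) sa \<ge> (\<lambda>s. E s * exp (- C * s)) t"
    proof (rule DERIV_nonpos_imp_nonincreasing[OF True])
      fix x
      have "((\<lambda>s. E s * exp (- C * s)) has_real_derivative (E' x - C * E x) * exp (- C * x)) (at x)"
        by (auto intro!: derivative_eq_intros dE simp: algebra_simps)
      moreover have "(E' x - C * E x) * exp (- C * x) \<le> 0"
        using bnd[of x] by (intro mult_nonpos_nonneg) auto
      ultimately show "\<exists>y. ((\<lambda>s. E s * exp (- C * s)) has_real_derivative y) (at x) \<and> y \<le> 0" by blast
    qed
    then have "E t * exp (- C * t) \<le> 0" using E0 by simp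
    then show ?thesis using Enn[of t] by (simp add: mult_le_0_iff)
  next
    case False
    have "(\<lambda>s. E s * exp (C * s)) t \<le> (\<lambda>s. E s * exp (C * s)) sa"
    proof (rule DERIV_nonneg_imp_nondecreasing[of t sa "\<lambda>s. E s * exp (C * s)"])
      show "t \<le> sa" using False by simp
      fix x
      have "((\<lambda>s. E s * exp (C * s)) has_real_derivative (E' x + C * E x) * exp (C * x)) (at x)"
        by (auto intro!: derivative_eq_intros dE simp: algebra_simps)
      moreover have "(E' x + C * E x) * exp (C * x) \<ge> 0"
        using bnd[of x] by (intro mult_nonneg_nonneg) auto
      ultimately show "\<exists>y. ((\<lambda>s. E s * exp (C * s)) has_real_derivative y) (at x) \<and> y \<ge> 0" by blast
    qed
    then have "E t * exp (C * t) \<le> 0" using E0 by simp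
    then show ?thesis using Enn[of t] by (simp add: mult_le_0_iff)
  qed
  then show ?thesis unfolding E_def
    by (metis add_nonneg_eq_0_iff right_minus_eq zero_le_power2 zero_eq_power2)
qed

lemma rot_ids:
 fixes s c u v r :: real
 assumes "s\<^sup>2 + c\<^sup>2 = 1"
 shows "(v * c + u * s)\<^sup>2 + (u * c - v * s)\<^sup>2 = u\<^sup>2 + v\<^sup>2"
  and "(u * c - v * s) * c + (v * c + u * s) * s = u"
  and "(v * c + u * s) * c - (u * c - v * s) * s = v"
  and "(r * c) * c + (r * s) * s = r"
proof -
 have "(v * c + u * s)\<^sup>2 + (u * c - v * s)\<^sup>2 = (u\<^sup>2 + v\<^sup>2) * (s\<^sup>2 + c\<^sup>2)" by (simp add: power2_eq_square algebra_simps)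
 then show "(v * c + u * s)\<^sup>2 + (u * c - v * s)\<^sup>2 = u\<^sup>2 + v\<^sup>2" using assms by simp
 have "(u * c - v * s) * c + (v * c + u * s) * s = u * (s\<^sup>2 + c\<^sup>2)" by (simp add: power2_eq_square algebra_simps)
 then show "(u * c - v * s) * c + (v * c + u * s) * s = u" using assms by simp
 have "(v * c + u * s) * c - (u * c - v * s) * s = v * (s\<^sup>2 + c\<^sup>2)" by (simp add: power2_eq_square algebra_simps)
 then show "(v * c + u * s) * c - (u * c - v * s) * s = v" using assms by simp
 have "(r * c) * c + (r * s) * s = r * (s\<^sup>2 + c\<^sup>2)" by (simp add: power2_eq_square algebra_simps)
 then show "(r * c) * c + (r * s) * s = r" using assms by simp
qed

lemma pruefer:
  fixes u v du dv :: "real \<Rightarrow> real"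
  assumes du: "\<And>t. (u has_real_derivative du t) (at t)"
    and dv: "\<And>t. (v has_real_derivative dv t) (at t)"
    and cdu: "\<And>t. isCont du t" and cdv: "\<And>t. isCont dv t"
    and N: "\<And>t. u t ^ 2 + v t ^ 2 > 0"
  shows "\<exists>\<phi>. (\<forall>t. (\<phi> has_real_derivative (du t * v t - u t * dv t) / (u t ^ 2 + v t ^ 2)) (at t)) \<and>
     (\<forall>t. u t = sqrt (u t ^ 2 + v t ^ 2) * sin (\<phi> t) \<and> v t = sqrt (u t ^ 2 + v t ^ 2) * cos (\<phi> t))"
proof -
  define Nf where "Nf t = u t ^ 2 + v t ^ 2" for t
  define F where "F t = (du t * v t - u t * dv t) / Nf t" for t
  have Npos: "Nf t > 0" for t using N by (simp add: Nf_def)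
  have cu: "isCont u t" for t using du by (rule DERIV_isCont)
  have cv: "isCont v t" for t using dv by (rule DERIV_isCont)
  have cF: "isCont F t" for t
    unfolding F_def Nf_def using N[of t] cu cv cdu cdv
    by (intro continuous_intros) auto
  obtain \<Phi> where d\<Phi>: "\<And>t. (\<Phi> has_real_derivative F t) (at t)"
    using antideriv[OF cF] by blast
  define r0 where "r0 = sqrt (Nf 0)"
  have r0: "r0 > 0" "r0 ^ 2 = Nf 0" using Npos[of 0] by (auto simp: r0_def)
  have "(v 0 / r0)\<^sup>2 + (u 0 / r0)\<^sup>2 = 1"
    using r0 N[of 0] by (auto simp: power_divide Nf_def simp flip: add_divide_distrib)
  then obtain \<theta> where th: "v 0 / r0 = cos \<theta>" "u 0 / r0 = sin \<theta>"
    using sincos_total_2pi by metis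
  have u0: "u 0 = r0 * sin \<theta>" and v0: "v 0 = r0 * cos \<theta>" using th r0 by (auto simp: field_simps)
  define \<phi> where "\<phi> t = \<theta> + \<Phi> t - \<Phi> 0" for t
  have d\<phi>: "(\<phi> has_real_derivative F t) (at t)" for t
    unfolding \<phi>_def by (auto intro!: derivative_eq_intros d\<Phi>)
  have c\<phi>: "isCont \<phi> t" for t using d\<phi> by (rule DERIV_isCont)
  define ch where "ch t = u t * cos (\<phi> t) - v t * sin (\<phi> t)" for t
  define ch' where "ch' t = du t * cos (\<phi> t) - u t * sin (\<phi> t) * F t - dv t * sin (\<phi> t) - v t * cos (\<phi> t) * F t" for t
  have dch: "(ch has_real_derivative ch' t) (at t)" for t
    unfolding ch_def ch'_def by (auto intro!: derivative_eq_intros du dv d\<phi> simp: algebra_simps)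
  have dN: "(Nf has_real_derivative 2 * u t * du t + 2 * v t * dv t) (at t)" for t
    unfolding Nf_def by (auto intro!: derivative_eq_intros du dv simp: algebra_simps)
  have key: "ch' t * Nf t = (u t * du t + v t * dv t) * ch t" for t
  proof -
    have FN: "F t * Nf t = du t * v t - u t * dv t" using Npos[of t] by (simp add: F_def)
    have "ch' t * Nf t = du t * cos (\<phi> t) * Nf t - u t * sin (\<phi> t) * (F t * Nf t)
        - dv t * sin (\<phi> t) * Nf t - v t * cos (\<phi> t) * (F t * Nf t)"
      by (simp add: ch'_def algebra_simps)
    also have "\<dots> = (u t * du t + v t * dv t) * ch t"
      unfolding FN by (simp add: Nf_def ch_def power2_eq_square algebra_simps)
    finally show ?thesis .
  qed
  have dQ: "((\<lambda>t. (ch t * ch t) / Nf t) has_real_derivative 0) (at t)" for t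
  proof -
    have D: "((\<lambda>t. (ch t * ch t) / Nf t) has_real_derivative
       ((ch' t * ch t + ch' t * ch t) * Nf t - (ch t * ch t) * (2 * u t * du t + 2 * v t * dv t)) / (Nf t * Nf t)) (at t)"
      by (intro DERIV_divide DERIV_mult dch dN) (use Npos[of t] in auto)
    have Z: "(ch' t * ch t + ch' t * ch t) * Nf t - (ch t * ch t) * (2 * u t * du t + 2 * v t * dv t) = 0"
    proof -
      have "(ch' t * ch t + ch' t * ch t) * Nf t = 2 * ch t * (ch' t * Nf t)" by (simp add: algebra_simps)
      also have "\<dots> = (ch t * ch t) * (2 * u t * du t + 2 * v t * dv t)" unfolding key by (simp add: algebra_simps)
      finally show ?thesis by simp
    qed
    from D show ?thesis unfolding Z by simp
  qed
  have \<phi>0: "\<phi> 0 = \<theta>" by (simp add: \<phi>_def)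
  have ch0: "ch 0 = 0" by (simp add: ch_def \<phi>0 u0 v0 algebra_simps)
  have chz: "ch t = 0" for t
  proof -
    have "(ch t * ch t) / Nf t = (ch 0 * ch 0) / Nf 0"
      using DERIV_isconst_all[of "\<lambda>t. (ch t * ch t) / Nf t"] dQ by blast
    then have "ch t * ch t = 0" using ch0 Npos[of t] by simp
    then show ?thesis by simp
  qed
  define \<psi> where "\<psi> t = v t * cos (\<phi> t) + u t * sin (\<phi> t)" for t
  have sq: "\<psi> t ^ 2 + ch t ^ 2 = Nf t" for t
    unfolding \<psi>_def ch_def Nf_def by (rule rot_ids(1)) simp
  have \<psi>sq: "\<psi> t ^ 2 = Nf t" for t using sq[of t] chz[of t] by simp
  have c\<psi>: "isCont \<psi> t" for t unfolding \<psi>_def using cu cv c\<phi>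
    by (intro continuous_intros) (auto intro: continuous_at_compose[unfolded o_def])
  have \<psi>0: "\<psi> 0 = r0"
    unfolding \<psi>_def \<phi>0 u0 v0 by (rule rot_ids(4)) simp
  have \<psi>pos: "\<psi> t > 0" for t
  proof (rule ccontr)
    assume "\<not> \<psi> t > 0"
    then have le: "\<psi> t \<le> 0" by simp
    have cont: "continuous_on S \<psi>" for S using c\<psi> by (simp add: continuous_at_imp_continuous_on)
    obtain x where "\<psi> x = 0"
    proof (cases "0 \<le> t")
      case True
      then show ?thesis using IVT2'[of \<psi> t 0 0, OF le _ True cont] \<psi>0 r0 that by auto
    next
      case False
      then show ?thesis using IVT'[of \<psi> t 0 0, OF le _ _ cont] \<psi>0 r0 that by auto
    qed
    then show False using \<psi>sq[of x] Npos[of x] by simp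
  qed
  have \<psi>s: "\<psi> t = sqrt (Nf t)" for t
    using \<psi>sq[of t] \<psi>pos[of t] by (metis abs_of_pos real_sqrt_abs)
  have uu: "u t = ch t * cos (\<phi> t) + \<psi> t * sin (\<phi> t)" for t
    unfolding \<psi>_def ch_def by (rule rot_ids(2)[symmetric]) simp
  have vv: "v t = \<psi> t * cos (\<phi> t) - ch t * sin (\<phi> t)" for t
    unfolding \<psi>_def ch_def by (rule rot_ids(3)[symmetric]) simp
  show ?thesis
  proof (intro exI conjI allI)
    fix t
    show "(\<phi> has_real_derivative (du t * v t - u t * dv t) / (u t ^ 2 + v t ^ 2)) (at t)"
      using d\<phi>[of t] by (simp add: F_def Nf_def)
    show "u t = sqrt (u t ^ 2 + v t ^ 2) * sin (\<phi> t)" using uu[of t] chz[of t] \<psi>s[of t] by (simp add: Nf_def)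
    show "v t = sqrt (u t ^ 2 + v t ^ 2) * cos (\<phi> t)" using vv[of t] chz[of t] \<psi>s[of t] by (simp add: Nf_def)
  qed
qed

lemma minimal_nonconst:
  assumes "minimal_period f T"
  shows "\<exists>s. f s \<noteq> f 0"
proof (rule ccontr)
  assume "\<not> (\<exists>s. f s \<noteq> f 0)"
  then have "\<forall>s. f s = f 0" by blast
  then have "\<forall>s. f (s + T/2) = f s" by metis
  then have "periodic_with f (T/2)" using assms by (simp add: periodic_with_def minimal_period_def)
  moreover have "0 < T/2" "T/2 < T" using assms by (auto simp: periodic_with_def minimal_period_def)
  ultimately show False using assms by (auto simp: minimal_period_def)
qed

lemma cube_lip:
  fixes a b B H :: real
  assumes a: "\<bar>a\<bar> \<le> B" and b: "\<bar>b\<bar> \<le> B"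
  shows "\<bar>(2 * a ^ 3 + 2 * H * a) - (2 * b ^ 3 + 2 * H * b)\<bar> \<le> (6 * B\<^sup>2 + 2 * \<bar>H\<bar>) * \<bar>a - b\<bar>"
    and "\<bar>(- 2 * a ^ 3 + 2 * H * a) - (- 2 * b ^ 3 + 2 * H * b)\<bar> \<le> (6 * B\<^sup>2 + 2 * \<bar>H\<bar>) * \<bar>a - b\<bar>"
proof -
  have q: "\<bar>a\<^sup>2 + a * b + b\<^sup>2\<bar> \<le> 3 * B\<^sup>2"
  proof -
    have "\<bar>a\<^sup>2 + a * b + b\<^sup>2\<bar> \<le> \<bar>a\<bar>\<^sup>2 + \<bar>a\<bar> * \<bar>b\<bar> + \<bar>b\<bar>\<^sup>2"
      by (metis (no_types, opaque_lifting) abs_mult abs_triangle_ineq add_mono order_trans power2_abs abs_power2 order_refl)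
    also have "\<dots> \<le> B\<^sup>2 + B * B + B\<^sup>2"
      using a b by (intro add_mono mult_mono power_mono) auto
    finally show ?thesis by (simp add: power2_eq_square)
  qed
  have c: "\<bar>a ^ 3 - b ^ 3\<bar> \<le> 3 * B\<^sup>2 * \<bar>a - b\<bar>"
  proof -
    have "a ^ 3 - b ^ 3 = (a - b) * (a\<^sup>2 + a * b + b\<^sup>2)" by (simp add: power2_eq_square power3_eq_cube algebra_simps)
    then have "\<bar>a ^ 3 - b ^ 3\<bar> = \<bar>a - b\<bar> * \<bar>a\<^sup>2 + a * b + b\<^sup>2\<bar>" by (simp add: abs_mult)
    also have "\<dots> \<le> \<bar>a - b\<bar> * (3 * B\<^sup>2)" using q by (intro mult_left_mono) auto
    also have "\<dots> = 3 * B\<^sup>2 * \<bar>a - b\<bar>" by (rule mult.commute)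
    finally show ?thesis .
  qed
  have e1: "(2 * a ^ 3 + 2 * H * a) - (2 * b ^ 3 + 2 * H * b) = 2 * (a ^ 3 - b ^ 3) + 2 * H * (a - b)"
    by (simp add: algebra_simps)
  have e2: "(- 2 * a ^ 3 + 2 * H * a) - (- 2 * b ^ 3 + 2 * H * b) = - 2 * (a ^ 3 - b ^ 3) + 2 * H * (a - b)"
    by (simp add: algebra_simps)
  have t: "\<bar>s * (a ^ 3 - b ^ 3) + 2 * H * (a - b)\<bar> \<le> (6 * B\<^sup>2 + 2 * \<bar>H\<bar>) * \<bar>a - b\<bar>" if "\<bar>s\<bar> = 2" for s
  proof -
    have "\<bar>s * (a ^ 3 - b ^ 3) + 2 * H * (a - b)\<bar> \<le> \<bar>s * (a ^ 3 - b ^ 3)\<bar> + \<bar>2 * H * (a - b)\<bar>"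
      by (rule abs_triangle_ineq)
    also have "\<dots> = 2 * \<bar>a ^ 3 - b ^ 3\<bar> + 2 * \<bar>H\<bar> * \<bar>a - b\<bar>" using that by (simp add: abs_mult)
    also have "\<dots> \<le> 2 * (3 * B\<^sup>2 * \<bar>a - b\<bar>) + 2 * \<bar>H\<bar> * \<bar>a - b\<bar>" using c by (intro add_right_mono mult_left_mono) auto
    finally show ?thesis by (simp add: algebra_simps)
  qed
  show "\<bar>(2 * a ^ 3 + 2 * H * a) - (2 * b ^ 3 + 2 * H * b)\<bar> \<le> (6 * B\<^sup>2 + 2 * \<bar>H\<bar>) * \<bar>a - b\<bar>"
    unfolding e1 by (rule t) simp
  show "\<bar>(- 2 * a ^ 3 + 2 * H * a) - (- 2 * b ^ 3 + 2 * H * b)\<bar> \<le> (6 * B\<^sup>2 + 2 * \<bar>H\<bar>) * \<bar>a - b\<bar>"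
    unfolding e2 by (rule t) simp
qed

lemma well:
  fixes m M H :: real
  assumes "m < M" and fM: "M * (M\<^sup>2 + H) < 0" and fm: "m * (m\<^sup>2 + H) > 0"
  shows "0 < M \<and> M\<^sup>2 < -H \<and> m < 0 \<and> m\<^sup>2 < -H"
proof -
  have Mpos: "M > 0"
  proof (rule ccontr)
    assume "\<not> M > 0"
    then have "M < 0" using fM by (cases "M = 0") auto
    then have "M\<^sup>2 + H > 0" using fM by (simp add: mult_less_0_iff)
    have "m < 0" using \<open>M < 0\<close> assms by simp
    have "M\<^sup>2 < m\<^sup>2" using \<open>m < M\<close> \<open>M < 0\<close> by (simp add: power2_eq_square) (smt (verit) mult_strict_mono' mult_minus_left mult_minus_right)
    then have "m\<^sup>2 + H > 0" using \<open>M\<^sup>2 + H > 0\<close> by simp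
    then have "m * (m\<^sup>2 + H) < 0" using \<open>m < 0\<close> by (simp add: mult_neg_pos)
    then show False using fm by simp
  qed
  have MH: "M\<^sup>2 + H < 0" using fM Mpos by (simp add: mult_less_0_iff)
  have mneg: "m < 0"
  proof (rule ccontr)
    assume "\<not> m < 0"
    then have "m > 0" using fm by (cases "m = 0") auto
    then have "m\<^sup>2 + H > 0" using fm by (simp add: zero_less_mult_iff)
    have "m\<^sup>2 < M\<^sup>2" using \<open>m < M\<close> \<open>m > 0\<close> by (simp add: power_strict_mono)
    then show False using MH \<open>m\<^sup>2 + H > 0\<close> by simp
  qed
  have "m\<^sup>2 + H < 0" using fm mneg by (simp add: zero_less_mult_iff)
  then show ?thesis using Mpos MH mneg by simp
qed

lemma deriv_periodic:
  fixes f df :: "real \<Rightarrow> real"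
  assumes d: "\<And>t. (f has_real_derivative df t) (at t)" and p: "\<forall>s. f (s + T) = f s"
  shows "df (s + T) = df s"
proof -
  have "((\<lambda>x. f (x + T)) has_real_derivative df (s + T)) (at s)"
    using d[of "s + T"] by (simp add: DERIV_shift)
  moreover have "(\<lambda>x. f (x + T)) = f" using p by auto
  ultimately have "(f has_real_derivative df (s + T)) (at s)" by simp
  then show ?thesis using d[of s] by (rule DERIV_unique)
qed

lemma energy_mono:
  fixes R0 R1 a :: real
  assumes "R0 \<ge> 0" "R1 \<ge> 0" "R1\<^sup>2 + (R1 * a) ^ 4 = R0\<^sup>2 + (R0 * a) ^ 4"
  shows "R1 = R0"
proof -
  have mono: "x\<^sup>2 + (x * a) ^ 4 < y\<^sup>2 + (y * a) ^ 4" if "0 \<le> x" "x < y" for x y :: real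
  proof -
    have "x\<^sup>2 < y\<^sup>2" using that by (simp add: power_strict_mono)
    moreover have "(x * a) ^ 4 \<le> (y * a) ^ 4"
    proof -
      have "x ^ 4 \<le> y ^ 4" using that by (simp add: power_mono)
      then have "x ^ 4 * a ^ 4 \<le> y ^ 4 * a ^ 4" by (rule mult_right_mono) (simp add: zero_le_even_power)
      then show ?thesis by (simp add: power_mult_distrib)
    qed
    ultimately show ?thesis by simp
  qed
  show ?thesis
  proof (rule ccontr)
    assume "R1 \<noteq> R0"
    then consider "R1 < R0" | "R0 < R1" by linarith
    then show False using mono[of R1 R0] mono[of R0 R1] assms by cases auto
  qed
qed

theorem proposition3p1:
  fixes x y vx vy :: "real \<Rightarrow> real"
    and \<xi> \<eta> d\<xi> d\<eta> tt :: "real \<Rightarrow> real"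
    and H c T\<^sub>\<xi> T\<^sub>\<eta> :: real
  assumes stark:
    "\<And>t. (x t, y t) \<noteq> (0, 0) \<Longrightarrow>
       (x has_real_derivative vx t) (at t) \<and> (y has_real_derivative vy t) (at t) \<and>
       (vx has_real_derivative (- x t / (sqrt (x t ^ 2 + y t ^ 2)) ^ 3 + 1)) (at t) \<and>
       (vy has_real_derivative (- y t / (sqrt (x t ^ 2 + y t ^ 2)) ^ 3)) (at t)"
    and energy: "\<And>t. (x t, y t) \<noteq> (0, 0) \<Longrightarrow> stark_energy (x t) (y t) (vx t) (vy t) = H"
    and const: "\<And>t. (x t, y t) \<noteq> (0, 0) \<Longrightarrow> stark_const (x t) (y t) (vx t) (vy t) = c"
    and time: "\<And>\<tau>. (tt has_real_derivative (\<xi> \<tau> ^ 2 + \<eta> \<tau> ^ 2)) (at \<tau>)"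
    and par_xi: "\<And>\<tau>. \<xi> \<tau> ^ 2 = sqrt (x (tt \<tau>) ^ 2 + y (tt \<tau>) ^ 2) + x (tt \<tau>)"
    and par_eta: "\<And>\<tau>. \<eta> \<tau> ^ 2 = sqrt (x (tt \<tau>) ^ 2 + y (tt \<tau>) ^ 2) - x (tt \<tau>)"
    and par_y: "\<And>\<tau>. \<xi> \<tau> * \<eta> \<tau> = y (tt \<tau>)"
    and xi_d1: "\<And>\<tau>. (\<xi> has_real_derivative d\<xi> \<tau>) (at \<tau>)"
    and xi_d2: "\<And>\<tau>. (d\<xi> has_real_derivative (2 * \<xi> \<tau> ^ 3 + 2 * H * \<xi> \<tau>)) (at \<tau>)"
    and xi_int: "\<And>\<tau>. d\<xi> \<tau> ^ 2 = \<xi> \<tau> ^ 4 + 2 * H * \<xi> \<tau> ^ 2 + 2 * (c + 1)"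
    and eta_d1: "\<And>\<tau>. (\<eta> has_real_derivative d\<eta> \<tau>) (at \<tau>)"
    and eta_d2: "\<And>\<tau>. (d\<eta> has_real_derivative (- 2 * \<eta> \<tau> ^ 3 + 2 * H * \<eta> \<tau>)) (at \<tau>)"
    and eta_int: "\<And>\<tau>. d\<eta> \<tau> ^ 2 = - (\<eta> \<tau> ^ 4) + 2 * H * \<eta> \<tau> ^ 2 - 2 * (c - 1)"
    and per_xi: "minimal_period \<xi> T\<^sub>\<xi>"
    and per_eta: "minimal_period \<eta> T\<^sub>\<eta>"
  shows "T\<^sub>\<xi> > T\<^sub>\<eta>"
proof -
  have cxi: "isCont \<xi> t" for t using xi_d1 by (rule DERIV_isCont)
  have cdxi: "isCont d\<xi> t" for t using xi_d2 by (rule DERIV_isCont)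
  have ceta: "isCont \<eta> t" for t using eta_d1 by (rule DERIV_isCont)
  have cdeta: "isCont d\<eta> t" for t using eta_d2 by (rule DERIV_isCont)
  have Txi: "T\<^sub>\<xi> > 0" and pxi: "\<forall>s. \<xi> (s + T\<^sub>\<xi>) = \<xi> s"
    using per_xi by (auto simp: minimal_period_def periodic_with_def)
  have Teta: "T\<^sub>\<eta> > 0" and peta: "\<forall>s. \<eta> (s + T\<^sub>\<eta>) = \<eta> s"
    using per_eta by (auto simp: minimal_period_def periodic_with_def)
  have mineta: "\<not> periodic_with \<eta> T'" if "0 < T'" "T' < T\<^sub>\<eta>" for T'
    using per_eta that by (auto simp: minimal_period_def)
  obtain sx where sx: "\<xi> sx \<noteq> \<xi> 0" using minimal_nonconst[OF per_xi] by blast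
  obtain se where se: "\<eta> se \<noteq> \<eta> 0" using minimal_nonconst[OF per_eta] by blast

  obtain t1 where t1: "\<forall>s. \<xi> s \<le> \<xi> t1" using periodic_max[OF cxi Txi pxi] by blast
  obtain t2 where t2: "\<forall>s. \<xi> t2 \<le> \<xi> s" using periodic_min[OF cxi Txi pxi] by blast
  define M where "M = \<xi> t1"
  define m where "m = \<xi> t2"
  have mx: "d\<xi> t1 = 0 \<and> 2 * M ^ 3 + 2 * H * M \<le> 0"
    using max_second[OF xi_d1 xi_d2[of t1] t1] by (simp add: M_def)
  have mn: "d\<xi> t2 = 0 \<and> 2 * m ^ 3 + 2 * H * m \<ge> 0"
    using min_second[OF xi_d1 xi_d2[of t2] t2] by (simp add: m_def)
  have rng: "m \<le> \<xi> s \<and> \<xi> s \<le> M" for s using t1 t2 by (simp add: M_def m_def)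
  have mM: "m < M"
  proof (rule ccontr)
    assume "\<not> m < M"
    then have "\<xi> s = M" for s using rng[of s] by linarith
    then show False using sx by simp
  qed
  define Bx where "Bx = \<bar>m\<bar> + \<bar>M\<bar>"
  have bx: "\<bar>\<xi> s\<bar> \<le> Bx" for s using rng[of s] unfolding Bx_def by arith
  have equil: False if a: "2 * a ^ 3 + 2 * H * a = 0" "\<xi> t0 = a" "d\<xi> t0 = 0" for a t0
  proof -
    have "\<xi> t = a" for t
    proof (rule ode_unique[where ua = \<xi> and va = d\<xi> and ub = "\<lambda>_. a" and vb = "\<lambda>_. 0"
          and g = "\<lambda>s. 2 * s ^ 3 + 2 * H * s" and L = "6 * Bx\<^sup>2 + 2 * \<bar>H\<bar>" and sa = t0 and t = t])
      show "\<And>t. (\<xi> has_real_derivative d\<xi> t) (at t)" by (rule xi_d1)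
      show "\<And>t. (d\<xi> has_real_derivative 2 * \<xi> t ^ 3 + 2 * H * \<xi> t) (at t)" by (rule xi_d2)
      show "\<And>t. ((\<lambda>_. 0) has_real_derivative 2 * a ^ 3 + 2 * H * a) (at t)" using a(1) by simp
      show "\<And>t. ((\<lambda>_. a) has_real_derivative 0) (at t)" by simp
      show "0 \<le> 6 * Bx\<^sup>2 + 2 * \<bar>H\<bar>" by simp
      show "\<And>t. \<bar>2 * \<xi> t ^ 3 + 2 * H * \<xi> t - (2 * a ^ 3 + 2 * H * a)\<bar> \<le> (6 * Bx\<^sup>2 + 2 * \<bar>H\<bar>) * \<bar>\<xi> t - a\<bar>"
      proof -
        fix t
        have "\<bar>a\<bar> \<le> Bx" using bx[of t0] a(2) by simp
        from cube_lip(1)[OF bx[of t] this, of H]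
        show "\<bar>2 * \<xi> t ^ 3 + 2 * H * \<xi> t - (2 * a ^ 3 + 2 * H * a)\<bar> \<le> (6 * Bx\<^sup>2 + 2 * \<bar>H\<bar>) * \<bar>\<xi> t - a\<bar>" .
      qed
      show "\<xi> t0 = a" "d\<xi> t0 = 0" using a by auto
    qed
    then show False using sx by simp
  qed
  have Hneg: "H < 0"
  proof (rule ccontr)
    assume "\<not> H < 0"
    then have H0: "H \<ge> 0" by simp
    have "M \<le> 0"
    proof (rule ccontr)
      assume "\<not> M \<le> 0"
      then have "M ^ 3 > 0" "H * M \<ge> 0" using H0 by auto
      then show False using mx by linarith
    qed
    moreover have "m \<ge> 0"
    proof (rule ccontr)
      assume "\<not> m \<ge> 0"
      then have "m ^ 3 < 0" "H * m \<le> 0" using H0 by (auto simp: power_less_zero_eq mult_nonneg_nonpos)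
      then show False using mn by linarith
    qed
    ultimately show False using mM by simp
  qed
  have fM: "M * (M\<^sup>2 + H) < 0"
  proof -
    have "2 * M ^ 3 + 2 * H * M \<noteq> 0"
    proof
      assume z: "2 * M ^ 3 + 2 * H * M = 0"
      have "\<xi> t1 = M" by (simp add: M_def)
      then show False using equil[OF z, of t1] mx by blast
    qed
    then have "2 * M ^ 3 + 2 * H * M < 0" using mx by linarith
    moreover have "2 * M ^ 3 + 2 * H * M = 2 * (M * (M\<^sup>2 + H))" by (simp add: power2_eq_square power3_eq_cube algebra_simps)
    ultimately show ?thesis by simp
  qed
  have fm: "m * (m\<^sup>2 + H) > 0"
  proof -
    have "2 * m ^ 3 + 2 * H * m \<noteq> 0"
    proof
      assume z: "2 * m ^ 3 + 2 * H * m = 0"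
      have "\<xi> t2 = m" by (simp add: m_def)
      then show False using equil[OF z, of t2] mn by blast
    qed
    then have "2 * m ^ 3 + 2 * H * m > 0" using mn by linarith
    moreover have "2 * m ^ 3 + 2 * H * m = 2 * (m * (m\<^sup>2 + H))" by (simp add: power2_eq_square power3_eq_cube algebra_simps)
    ultimately show ?thesis by simp
  qed
  have wl: "0 < M \<and> M\<^sup>2 < -H \<and> m < 0 \<and> m\<^sup>2 < -H" using well[OF mM fM fm] .
  have xsq: "\<xi> s ^ 2 < - H" for s
  proof (cases "\<xi> s \<ge> 0")
    case True
    then have "\<xi> s ^ 2 \<le> M ^ 2" using rng[of s] by (intro power_mono) auto
    then show ?thesis using wl by simp
  next
    case False
    then have "(- \<xi> s) ^ 2 \<le> (- m) ^ 2" using rng[of s] by (intro power_mono) auto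
    then show ?thesis using wl by simp
  qed
  define \<omega> where "\<omega> = sqrt (- 2 * H)"
  have wpos: "\<omega> > 0" using Hneg by (simp add: \<omega>_def)
  have w2: "\<omega> ^ 2 = - 2 * H" using Hneg by (simp add: \<omega>_def)
  define K where "K = 2 * (c + 1)"
  have Kpos: "K > 0"
  proof -
    have "0 = M ^ 4 + 2 * H * M ^ 2 + K" using xi_int[of t1] mx by (simp add: K_def M_def)
    then have "K = M\<^sup>2 * (- M\<^sup>2 - 2 * H)" by (simp add: power2_eq_square power4_eq_xxxx algebra_simps)
    moreover have "M\<^sup>2 > 0" "- M\<^sup>2 - 2 * H > 0" using wl Hneg by auto
    ultimately show ?thesis by simp
  qed
  have NX: "(\<omega> * \<xi> s) ^ 2 + d\<xi> s ^ 2 = \<xi> s ^ 4 + K" for s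
    using xi_int[of s] w2 by (simp add: power_mult_distrib K_def algebra_simps)
  have NXpos: "(\<omega> * \<xi> s) ^ 2 + d\<xi> s ^ 2 > 0" for s
    using NX[of s] Kpos by (simp add: add_nonneg_pos)
  obtain \<phi> where d\<phi>: "\<forall>t. (\<phi> has_real_derivative (\<omega> * d\<xi> t * d\<xi> t - \<omega> * \<xi> t * (2 * \<xi> t ^ 3 + 2 * H * \<xi> t))
          / ((\<omega> * \<xi> t) ^ 2 + d\<xi> t ^ 2)) (at t)"
    and pol: "\<forall>t. \<omega> * \<xi> t = sqrt ((\<omega> * \<xi> t) ^ 2 + d\<xi> t ^ 2) * sin (\<phi> t) \<and>
                d\<xi> t = sqrt ((\<omega> * \<xi> t) ^ 2 + d\<xi> t ^ 2) * cos (\<phi> t)"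
  proof -
    have "\<exists>\<phi>. (\<forall>t. (\<phi> has_real_derivative (\<omega> * d\<xi> t * d\<xi> t - \<omega> * \<xi> t * (2 * \<xi> t ^ 3 + 2 * H * \<xi> t))
          / ((\<omega> * \<xi> t) ^ 2 + d\<xi> t ^ 2)) (at t)) \<and>
     (\<forall>t. \<omega> * \<xi> t = sqrt ((\<omega> * \<xi> t) ^ 2 + d\<xi> t ^ 2) * sin (\<phi> t) \<and>
          d\<xi> t = sqrt ((\<omega> * \<xi> t) ^ 2 + d\<xi> t ^ 2) * cos (\<phi> t))"
    proof (rule pruefer[where u = "\<lambda>s. \<omega> * \<xi> s" and v = "d\<xi>" and du = "\<lambda>s. \<omega> * d\<xi> s" and dv = "\<lambda>s. 2 * \<xi> s ^ 3 + 2 * H * \<xi> s"])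
      show "((\<lambda>s. \<omega> * \<xi> s) has_real_derivative \<omega> * d\<xi> t) (at t)" for t
        by (auto intro!: derivative_eq_intros xi_d1)
      show "(d\<xi> has_real_derivative 2 * \<xi> t ^ 3 + 2 * H * \<xi> t) (at t)" for t by (rule xi_d2)
      show "isCont (\<lambda>s. \<omega> * d\<xi> s) t" for t using cdxi by (intro continuous_intros)
      show "isCont (\<lambda>s. 2 * \<xi> s ^ 3 + 2 * H * \<xi> s) t" for t using cxi by (intro continuous_intros)
      show "(\<omega> * \<xi> t) ^ 2 + d\<xi> t ^ 2 > 0" for t by (rule NXpos)
    qed
    then obtain \<phi> where "\<forall>t. (\<phi> has_real_derivative (\<omega> * d\<xi> t * d\<xi> t - \<omega> * \<xi> t * (2 * \<xi> t ^ 3 + 2 * H * \<xi> t))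
          / ((\<omega> * \<xi> t) ^ 2 + d\<xi> t ^ 2)) (at t)"
     "\<forall>t. \<omega> * \<xi> t = sqrt ((\<omega> * \<xi> t) ^ 2 + d\<xi> t ^ 2) * sin (\<phi> t) \<and>
          d\<xi> t = sqrt ((\<omega> * \<xi> t) ^ 2 + d\<xi> t ^ 2) * cos (\<phi> t)" by blast
    then show ?thesis using that by blast
  qed
  define Dx where "Dx t = (\<omega> * d\<xi> t * d\<xi> t - \<omega> * \<xi> t * (2 * \<xi> t ^ 3 + 2 * H * \<xi> t)) / ((\<omega> * \<xi> t) ^ 2 + d\<xi> t ^ 2)" for t
  have dphi: "(\<phi> has_real_derivative Dx t) (at t)" for t using d\<phi> by (simp add: Dx_def)
  have Dxpos: "Dx t > 0" for t
  proof -
    have num: "\<omega> * d\<xi> t * d\<xi> t - \<omega> * \<xi> t * (2 * \<xi> t ^ 3 + 2 * H * \<xi> t)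
        = \<omega> * (d\<xi> t ^ 2 + 2 * \<xi> t ^ 2 * (- H - \<xi> t ^ 2))"
      by (simp add: power2_eq_square power3_eq_cube algebra_simps)
    have "d\<xi> t ^ 2 + 2 * \<xi> t ^ 2 * (- H - \<xi> t ^ 2) > 0"
    proof (cases "\<xi> t = 0")
      case True
      then show ?thesis using NXpos[of t] by simp
    next
      case False
      then have "\<xi> t ^ 2 > 0" by simp
      moreover have "- H - \<xi> t ^ 2 > 0" using xsq[of t] by simp
      ultimately have "2 * \<xi> t ^ 2 * (- H - \<xi> t ^ 2) > 0" by simp
      then show ?thesis by (simp add: add_nonneg_pos)
    qed
    then show ?thesis unfolding Dx_def num using wpos NXpos[of t] by simp
  qed
  have Dxle: "Dx t \<le> \<omega>" for t
  proof -
    have "\<omega> * d\<xi> t * d\<xi> t - \<omega> * \<xi> t * (2 * \<xi> t ^ 3 + 2 * H * \<xi> t) \<le> \<omega> * ((\<omega> * \<xi> t) ^ 2 + d\<xi> t ^ 2)"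
    proof -
      have "\<omega> * ((\<omega> * \<xi> t) ^ 2 + d\<xi> t ^ 2) - (\<omega> * d\<xi> t * d\<xi> t - \<omega> * \<xi> t * (2 * \<xi> t ^ 3 + 2 * H * \<xi> t))
          = \<omega> * (2 * \<xi> t ^ 4) + \<omega> * \<xi> t ^ 2 * (\<omega> ^ 2 + 2 * H)"
        by (simp add: power2_eq_square power3_eq_cube power4_eq_xxxx algebra_simps)
      also have "\<dots> = \<omega> * (2 * \<xi> t ^ 4)" using w2 by simp
      also have "\<dots> \<ge> 0" using wpos by simp
      finally show ?thesis by simp
    qed
    then show ?thesis unfolding Dx_def using NXpos[of t] by (simp add: pos_divide_le_eq)
  qed
  define T where "T = T\<^sub>\<xi>"
  have xT: "\<xi> (t1 + T) = \<xi> t1" using pxi by (simp add: T_def)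
  have dxT: "d\<xi> (t1 + T) = d\<xi> t1" using deriv_periodic[OF xi_d1 pxi] by (simp add: T_def)
  define R where "R = sqrt ((\<omega> * \<xi> t1) ^ 2 + d\<xi> t1 ^ 2)"
  have Rpos: "R > 0" using NXpos[of t1] by (simp add: R_def)
  have sin_eq: "sin (\<phi> (t1 + T)) = sin (\<phi> t1)"
  proof -
    have "R * sin (\<phi> (t1 + T)) = R * sin (\<phi> t1)"
      using pol[rule_format, of t1] pol[rule_format, of "t1 + T"] xT dxT by (simp add: R_def)
    then show ?thesis using Rpos by simp
  qed
  have cos_eq: "cos (\<phi> (t1 + T)) = cos (\<phi> t1)"
  proof -
    have "R * cos (\<phi> (t1 + T)) = R * cos (\<phi> t1)"
      using pol[rule_format, of t1] pol[rule_format, of "t1 + T"] xT dxT by (simp add: R_def)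
    then show ?thesis using Rpos by simp
  qed
  have "cos (\<phi> (t1 + T) - \<phi> t1) = 1"
    unfolding cos_diff sin_eq cos_eq by (simp add: power2_eq_square[symmetric])
  then obtain n :: int where n: "\<phi> (t1 + T) - \<phi> t1 = of_int n * 2 * pi"
    using cos_one_2pi_int by blast
  have inc: "\<phi> t1 < \<phi> (t1 + T)"
  proof (rule DERIV_pos_imp_increasing[of t1 "t1 + T" \<phi>])
    show "t1 < t1 + T" using Txi by (simp add: T_def)
    fix x
    show "\<exists>y. (\<phi> has_real_derivative y) (at x) \<and> y > 0" using dphi[of x] Dxpos[of x] by blast
  qed
  have "n > 0"
  proof (rule ccontr)
    assume "\<not> n > 0"
    then have h: "real_of_int n * 2 * pi \<le> 0" by (simp add: mult_nonpos_nonneg)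
    show False using inc n h by linarith
  qed
  then have "(of_int n :: real) \<ge> 1" by simp
  then have lowx: "\<phi> (t1 + T) - \<phi> t1 \<ge> 2 * pi" using n by simp
  have "(\<lambda>s. \<omega> * s - \<phi> s) t1 \<le> (\<lambda>s. \<omega> * s - \<phi> s) (t1 + T)"
  proof (rule DERIV_nonneg_imp_nondecreasing[of t1 "t1 + T" "\<lambda>s. \<omega> * s - \<phi> s"])
    show "t1 \<le> t1 + T" using Txi by (simp add: T_def)
    fix x
    have "((\<lambda>s. \<omega> * s - \<phi> s) has_real_derivative \<omega> - Dx x) (at x)"
      by (auto intro!: derivative_eq_intros dphi)
    then show "\<exists>y. ((\<lambda>s. \<omega> * s - \<phi> s) has_real_derivative y) (at x) \<and> y \<ge> 0"
      using Dxle[of x] by force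
  qed
  then have "\<phi> (t1 + T) - \<phi> t1 \<le> \<omega> * T" by (simp add: algebra_simps)
  then have xi_bound: "2 * pi \<le> \<omega> * T\<^sub>\<xi>" using lowx by (simp add: T_def)

  obtain e1 where e1: "\<forall>s. \<eta> s \<le> \<eta> e1" using periodic_max[OF ceta Teta peta] by blast
  obtain e2 where e2: "\<forall>s. \<eta> e2 \<le> \<eta> s" using periodic_min[OF ceta Teta peta] by blast
  define Be where "Be = \<bar>\<eta> e1\<bar> + \<bar>\<eta> e2\<bar>"
  have be: "\<bar>\<eta> s\<bar> \<le> Be" for s using e1[rule_format, of s] e2[rule_format, of s] unfolding Be_def by arith
  have Be0: "Be \<ge> 0" by (simp add: Be_def)
  have lipe: "\<bar>(- 2 * a ^ 3 + 2 * H * a) - (- 2 * b ^ 3 + 2 * H * b)\<bar> \<le> (6 * Be\<^sup>2 + 2 * \<bar>H\<bar>) * \<bar>a - b\<bar>"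
    if "\<bar>a\<bar> \<le> Be" "\<bar>b\<bar> \<le> Be" for a b
    using cube_lip(2)[OF that] .
  have NEpos: "(\<omega> * \<eta> s) ^ 2 + d\<eta> s ^ 2 > 0" for s
  proof (rule ccontr)
    assume "\<not> (\<omega> * \<eta> s) ^ 2 + d\<eta> s ^ 2 > 0"
    then have "(\<omega> * \<eta> s) ^ 2 + d\<eta> s ^ 2 \<le> 0" by simp
    then have "\<omega> * \<eta> s = 0 \<and> d\<eta> s = 0" by (rule sum_power2_le_zero_iff[THEN iffD1])
    then have z: "\<eta> s = 0" "d\<eta> s = 0" using wpos by auto
    have "\<eta> t = 0" for t
    proof (rule ode_unique[where ua = \<eta> and va = d\<eta> and ub = "\<lambda>_. 0" and vb = "\<lambda>_. 0"
          and g = "\<lambda>s. - 2 * s ^ 3 + 2 * H * s" and L = "6 * Be\<^sup>2 + 2 * \<bar>H\<bar>" and sa = s and t = t])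
      show "\<And>t. (\<eta> has_real_derivative d\<eta> t) (at t)" by (rule eta_d1)
      show "\<And>t. (d\<eta> has_real_derivative - 2 * \<eta> t ^ 3 + 2 * H * \<eta> t) (at t)" by (rule eta_d2)
      show "\<And>t. ((\<lambda>_. 0) has_real_derivative 0) (at t)" by simp
      show "\<And>t. ((\<lambda>_. 0) has_real_derivative - 2 * 0 ^ 3 + 2 * H * 0) (at t)" by simp
      show "0 \<le> 6 * Be\<^sup>2 + 2 * \<bar>H\<bar>" by simp
      show "\<bar>- 2 * \<eta> t ^ 3 + 2 * H * \<eta> t - (- 2 * 0 ^ 3 + 2 * H * 0)\<bar> \<le> (6 * Be\<^sup>2 + 2 * \<bar>H\<bar>) * \<bar>\<eta> t - 0\<bar>" for t
      proof -
        have "\<bar>0::real\<bar> \<le> Be" using Be0 by simp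
        from lipe[OF be[of t] this] show ?thesis .
      qed
      show "\<eta> s = 0" "d\<eta> s = 0" using z by auto
    qed
    then show False using se by simp
  qed
  obtain \<theta> where d\<theta>: "\<forall>t. (\<theta> has_real_derivative (\<omega> * d\<eta> t * d\<eta> t - \<omega> * \<eta> t * (- 2 * \<eta> t ^ 3 + 2 * H * \<eta> t))
          / ((\<omega> * \<eta> t) ^ 2 + d\<eta> t ^ 2)) (at t)"
    and pole: "\<forall>t. \<omega> * \<eta> t = sqrt ((\<omega> * \<eta> t) ^ 2 + d\<eta> t ^ 2) * sin (\<theta> t) \<and>
                d\<eta> t = sqrt ((\<omega> * \<eta> t) ^ 2 + d\<eta> t ^ 2) * cos (\<theta> t)"
  proof -
    have "\<exists>\<phi>. (\<forall>t. (\<phi> has_real_derivative (\<omega> * d\<eta> t * d\<eta> t - \<omega> * \<eta> t * (- 2 * \<eta> t ^ 3 + 2 * H * \<eta> t))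
          / ((\<omega> * \<eta> t) ^ 2 + d\<eta> t ^ 2)) (at t)) \<and>
     (\<forall>t. \<omega> * \<eta> t = sqrt ((\<omega> * \<eta> t) ^ 2 + d\<eta> t ^ 2) * sin (\<phi> t) \<and>
          d\<eta> t = sqrt ((\<omega> * \<eta> t) ^ 2 + d\<eta> t ^ 2) * cos (\<phi> t))"
    proof (rule pruefer[where u = "\<lambda>s. \<omega> * \<eta> s" and v = "d\<eta>" and du = "\<lambda>s. \<omega> * d\<eta> s" and dv = "\<lambda>s. - 2 * \<eta> s ^ 3 + 2 * H * \<eta> s"])
      show "((\<lambda>s. \<omega> * \<eta> s) has_real_derivative \<omega> * d\<eta> t) (at t)" for t
        by (auto intro!: derivative_eq_intros eta_d1)
      show "(d\<eta> has_real_derivative - 2 * \<eta> t ^ 3 + 2 * H * \<eta> t) (at t)" for t by (rule eta_d2)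
      show "isCont (\<lambda>s. \<omega> * d\<eta> s) t" for t using cdeta by (intro continuous_intros)
      show "isCont (\<lambda>s. - 2 * \<eta> s ^ 3 + 2 * H * \<eta> s) t" for t using ceta by (intro continuous_intros)
      show "(\<omega> * \<eta> t) ^ 2 + d\<eta> t ^ 2 > 0" for t by (rule NEpos)
    qed
    then obtain \<phi> where "\<forall>t. (\<phi> has_real_derivative (\<omega> * d\<eta> t * d\<eta> t - \<omega> * \<eta> t * (- 2 * \<eta> t ^ 3 + 2 * H * \<eta> t))
          / ((\<omega> * \<eta> t) ^ 2 + d\<eta> t ^ 2)) (at t)"
     "\<forall>t. \<omega> * \<eta> t = sqrt ((\<omega> * \<eta> t) ^ 2 + d\<eta> t ^ 2) * sin (\<phi> t) \<and>
          d\<eta> t = sqrt ((\<omega> * \<eta> t) ^ 2 + d\<eta> t ^ 2) * cos (\<phi> t)" by blast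
    then show ?thesis using that by blast
  qed
  define Ne where "Ne t = (\<omega> * \<eta> t) ^ 2 + d\<eta> t ^ 2" for t
  define De where "De t = \<omega> + 2 * \<omega> * \<eta> t ^ 4 / Ne t" for t
  have NeE: "Ne t + \<eta> t ^ 4 = - 2 * (c - 1)" for t
    using eta_int[of t] w2 by (simp add: Ne_def power_mult_distrib algebra_simps)
  have dtheta: "(\<theta> has_real_derivative De t) (at t)" for t
  proof -
    have "(\<omega> * d\<eta> t * d\<eta> t - \<omega> * \<eta> t * (- 2 * \<eta> t ^ 3 + 2 * H * \<eta> t)) = \<omega> * Ne t + 2 * \<omega> * \<eta> t ^ 4"
    proof -
      have e1: "Ne t = - 2 * H * \<eta> t ^ 2 + d\<eta> t ^ 2" using w2 by (simp add: Ne_def power_mult_distrib)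
      show ?thesis unfolding e1 by (simp add: power2_eq_square power3_eq_cube power4_eq_xxxx algebra_simps)
    qed
    then have "(\<omega> * d\<eta> t * d\<eta> t - \<omega> * \<eta> t * (- 2 * \<eta> t ^ 3 + 2 * H * \<eta> t)) / Ne t = De t"
    proof -
      have "Ne t > 0" using NEpos[of t] by (simp add: Ne_def)
      then show ?thesis unfolding \<open>(\<omega> * d\<eta> t * d\<eta> t - \<omega> * \<eta> t * (- 2 * \<eta> t ^ 3 + 2 * H * \<eta> t)) = \<omega> * Ne t + 2 * \<omega> * \<eta> t ^ 4\<close>
        by (simp add: De_def add_divide_distrib)
    qed
    then have eq: "(\<omega> * d\<eta> t * d\<eta> t - \<omega> * \<eta> t * (- 2 * \<eta> t ^ 3 + 2 * H * \<eta> t)) / ((\<omega> * \<eta> t) ^ 2 + d\<eta> t ^ 2) = De t"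
      unfolding Ne_def .
    show ?thesis using d\<theta>[rule_format, of t] unfolding eq .
  qed
  have Dege: "De t \<ge> \<omega>" for t using NEpos[of t] wpos by (simp add: De_def Ne_def)
  obtain t0 where t0: "\<eta> t0 \<noteq> 0"
    using se by (cases "\<eta> 0 = 0") auto
  have Degt: "De t0 > \<omega>" using NEpos[of t0] wpos t0 by (simp add: De_def Ne_def)
  define h where "h s = \<theta> s - \<omega> * s" for s
  have dh: "(h has_real_derivative De t - \<omega>) (at t)" for t
    unfolding h_def by (auto intro!: derivative_eq_intros dtheta)
  obtain d where d: "d > 0" "\<forall>k>0. k < d \<longrightarrow> h t0 < h (t0 + k)"
    using DERIV_pos_inc_right[OF dh[of t0]] Degt by auto
  define P0 where "P0 = 2 * pi / \<omega>"
  have P0pos: "P0 > 0" using wpos by (simp add: P0_def)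
  define k where "k = min (d / 2) P0"
  have k: "0 < k" "k < d" "k \<le> P0" using d P0pos by (auto simp: k_def)
  have "h t0 < h (t0 + k)" using d(2) k by auto
  also have "h (t0 + k) \<le> h (t0 + P0)"
  proof (rule DERIV_nonneg_imp_nondecreasing[of "t0 + k" "t0 + P0" h])
    show "t0 + k \<le> t0 + P0" using k by simp
    fix x
    show "\<exists>y. (h has_real_derivative y) (at x) \<and> y \<ge> 0" using dh[of x] Dege[of x] by force
  qed
  finally have "h t0 < h (t0 + P0)" .
  then have big: "\<theta> (t0 + P0) > \<theta> t0 + 2 * pi" using wpos by (simp add: h_def P0_def algebra_simps)
  have cth: "continuous_on S \<theta>" for S
    using dtheta by (meson DERIV_isCont continuous_at_imp_continuous_on)
  obtain p where p: "t0 \<le> p" "p \<le> t0 + P0" "\<theta> p = \<theta> t0 + 2 * pi"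
    using IVT'[of \<theta> t0 "\<theta> t0 + 2 * pi" "t0 + P0", OF _ _ _ cth] big P0pos by auto
  have "p \<noteq> t0" using p(3) by auto
  moreover have "p \<noteq> t0 + P0" using p(3) big by auto
  ultimately have pP: "t0 < p" "p < t0 + P0" using p by auto
  define P where "P = p - t0"
  have P: "0 < P" "P < P0" "p = t0 + P" using pP by (auto simp: P_def)
  have sp: "sin (\<theta> p) = sin (\<theta> t0)" "cos (\<theta> p) = cos (\<theta> t0)" using p(3) by simp_all
  define R0 where "R0 = sqrt (Ne t0)"
  define R1 where "R1 = sqrt (Ne p)"
  have R0: "R0 > 0" "R0\<^sup>2 = Ne t0" using NEpos[of t0] by (auto simp: R0_def Ne_def)
  have R1: "R1 > 0" "R1\<^sup>2 = Ne p" using NEpos[of p] by (auto simp: R1_def Ne_def)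
  have wet0: "\<omega> * \<eta> t0 = R0 * sin (\<theta> t0)" "d\<eta> t0 = R0 * cos (\<theta> t0)"
    using pole[rule_format, of t0] unfolding R0_def Ne_def by auto
  have wep: "\<omega> * \<eta> p = R1 * sin (\<theta> t0)" "d\<eta> p = R1 * cos (\<theta> t0)"
    using pole[rule_format, of p] sp unfolding R1_def Ne_def by auto
  have et0: "\<eta> t0 = R0 * (sin (\<theta> t0) / \<omega>)"
    using wet0(1) wpos by (simp add: field_simps)
  have ep: "\<eta> p = R1 * (sin (\<theta> t0) / \<omega>)"
    using wep(1) wpos by (simp add: field_simps)
  have "R1\<^sup>2 + (R1 * (sin (\<theta> t0) / \<omega>)) ^ 4 = R0\<^sup>2 + (R0 * (sin (\<theta> t0) / \<omega>)) ^ 4"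
    using NeE[of p] NeE[of t0] R0 R1 et0 ep by simp
  then have R10: "R1 = R0" by (rule energy_mono[OF less_imp_le[OF R0(1)] less_imp_le[OF R1(1)]])
  have etap: "\<eta> (t0 + P) = \<eta> t0" using ep et0 R10 P by simp
  have detap: "d\<eta> (t0 + P) = d\<eta> t0"
    using wep(2) wet0(2) R10 P by simp
  have shift: "\<eta> (t + P) = \<eta> t" for t
  proof (rule ode_unique[where ua = "\<lambda>s. \<eta> (s + P)" and va = "\<lambda>s. d\<eta> (s + P)" and ub = \<eta> and vb = d\<eta>
          and g = "\<lambda>s. - 2 * s ^ 3 + 2 * H * s" and L = "6 * Be\<^sup>2 + 2 * \<bar>H\<bar>" and sa = t0 and t = t])
    show "\<And>t. ((\<lambda>s. \<eta> (s + P)) has_real_derivative d\<eta> (t + P)) (at t)"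
      using eta_d1 by (simp add: DERIV_shift[symmetric])
    show "\<And>t. ((\<lambda>s. d\<eta> (s + P)) has_real_derivative - 2 * \<eta> (t + P) ^ 3 + 2 * H * \<eta> (t + P)) (at t)"
      using eta_d2 by (simp add: DERIV_shift[symmetric])
    show "\<And>t. (\<eta> has_real_derivative d\<eta> t) (at t)" by (rule eta_d1)
    show "\<And>t. (d\<eta> has_real_derivative - 2 * \<eta> t ^ 3 + 2 * H * \<eta> t) (at t)" by (rule eta_d2)
    show "\<And>t. \<bar>- 2 * \<eta> (t + P) ^ 3 + 2 * H * \<eta> (t + P) - (- 2 * \<eta> t ^ 3 + 2 * H * \<eta> t)\<bar>
        \<le> (6 * Be\<^sup>2 + 2 * \<bar>H\<bar>) * \<bar>\<eta> (t + P) - \<eta> t\<bar>"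
      using lipe[OF be be] by blast
    show "\<eta> (t0 + P) = \<eta> t0" "d\<eta> (t0 + P) = d\<eta> t0" using etap detap by auto
    show "0 \<le> 6 * Be\<^sup>2 + 2 * \<bar>H\<bar>" by simp
  qed
  have "periodic_with \<eta> P" using shift P by (simp add: periodic_with_def)
  then have "\<not> P < T\<^sub>\<eta>" using mineta P by blast
  then have "T\<^sub>\<eta> < P0" using P by simp
  moreover have "P0 \<le> T\<^sub>\<xi>" using xi_bound wpos by (simp add: P0_def pos_divide_le_eq mult.commute)
  ultimately show ?thesis by simp
qed

end
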